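(* Let $e\in\mathbb{Z}/2$, $n\in2\mathbb{N}$, and let $\Delta\in\mathfrak{A}^n$ satisfy $n^\Delta_{-\lambda}=n^\Delta_\lambda$ and $n^\Delta_{\lambda^q}=n^\Delta_\lambda$ for all $\lambda\in k^*$. Then ${}^ej_\Delta=n(q-(-1)^e)/4\in\mathbb{Z}/2$.
   Context: $k$ is an algebraic closure of $\mathbb{F}_q$, $q$ odd; $k^\triangle=k\setminus\{0,1,-1\}$. Permutations of $k^\triangle$: $\alpha(\lambda)=\lambda^{-1}$, $\beta(\lambda)=-\lambda$, $\gamma(\lambda)=\lambda^q$, $\gamma_e=\beta^e\gamma$. $\Omega_{\alpha,\gamma_e}$ is the set of orbits on $k^\triangle$ of the group generated by $\alpha,\gamma_e$, and $\Omega'_{\alpha,\gamma_e}$ the set of those orbits that are a single $\gamma_e$-orbit. For monic $\Delta\in k[X]$ with $\Delta(0)\ne0$ write $\Delta=\prod_{\lambda\in k^*}(X-\lambda)^{n^\Delta_\lambda}$. $\mathfrak{A}^n$ is the set of such $\Delta$ of degree $n$ with $n^\Delta_{\lambda^{-1}}=n^\Delta_\lambda$ for all $\lambda$ and $n^\Delta_1,n^\Delta_{-1}$ even. When $\lambda\mapsto n^\Delta_\lambda$ is constant on each $\mathcal{O}\in\Omega_{\alpha,\gamma_e}$ (with value $n^\Delta_{\mathcal{O}}$), set ${}^ej_\Delta=\sum_{\mathcal{O}\in\Omega'_{\alpha,\gamma_e}}n^\Delta_{\mathcal{O}}\in\mathbb{Z}/2$. *)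

theory Defs
  imports "HOL-Computational_Algebra.Computational_Algebra"
begin

definition ktri :: "'k::field set" where
  "ktri = UNIV - {0, 1, -1}"

text \<open>gamma_e(x) = (-1)^e * x^q  (i.e. beta^e composed with the q-Frobenius).\<close>
definition gam :: "nat \<Rightarrow> nat \<Rightarrow> 'k::field \<Rightarrow> 'k" where
  "gam q e x = (-1) ^ e * x ^ q"

text \<open>Orbit of x in k-triangle under the group generated by alpha (inversion) and gamma_e.\<close>
inductive_set orbAG :: "nat \<Rightarrow> nat \<Rightarrow> 'k::field \<Rightarrow> 'k set" for q e x where
  base: "x \<in> ktri \<Longrightarrow> x \<in> orbAG q e x"
| inv: "y \<in> orbAG q e x \<Longrightarrow> inverse y \<in> orbAG q e x"
| fwd: "y \<in> orbAG q e x \<Longrightarrow> gam q e y \<in> orbAG q e x"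
| bwd: "y \<in> orbAG q e x \<Longrightarrow> z \<in> ktri \<Longrightarrow> gam q e z = y \<Longrightarrow> z \<in> orbAG q e x"

inductive_set orbG :: "nat \<Rightarrow> nat \<Rightarrow> 'k::field \<Rightarrow> 'k set" for q e x where
  base: "x \<in> ktri \<Longrightarrow> x \<in> orbG q e x"
| fwd: "y \<in> orbG q e x \<Longrightarrow> gam q e y \<in> orbG q e x"
| bwd: "y \<in> orbG q e x \<Longrightarrow> z \<in> ktri \<Longrightarrow> gam q e z = y \<Longrightarrow> z \<in> orbG q e x"

definition OmegaAG :: "nat \<Rightarrow> nat \<Rightarrow> 'k::field set set" where
  "OmegaAG q e = {Ob. \<exists>x\<in>ktri. Ob = orbAG q e x}"

definition OmegaAG' :: "nat \<Rightarrow> nat \<Rightarrow> 'k::field set set" where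
  "OmegaAG' q e = {Ob \<in> OmegaAG q e. \<exists>x\<in>Ob. Ob = orbG q e x}"

definition mult :: "'k::field poly \<Rightarrow> 'k \<Rightarrow> nat" where
  "mult D x = order x D"

text \<open>n^Delta_O: the (common) value of the multiplicity on the orbit Ob.\<close>
definition multO :: "'k::field poly \<Rightarrow> 'k set \<Rightarrow> nat" where
  "multO D Ob = mult D (SOME x. x \<in> Ob)"

definition frakA :: "nat \<Rightarrow> 'k::field poly set" where
  "frakA n = {D. lead_coeff D = 1 \<and> poly D 0 \<noteq> 0 \<and> degree D = n
      \<and> (\<forall>x. x \<noteq> 0 \<longrightarrow> mult D (inverse x) = mult D x)
      \<and> even (mult D 1) \<and> even (mult D (-1))}"

text \<open>^e j_Delta, as an integer representative of the element of Z/2: the sum over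
  Omega' of n_O (orbits with n_O = 0 contribute nothing, so only the finitely many
  with n_O \<noteq> 0 are summed).\<close>
definition jinv :: "nat \<Rightarrow> nat \<Rightarrow> 'k::field poly \<Rightarrow> int" where
  "jinv q e D = (\<Sum>Ob\<in>{Ob \<in> OmegaAG' q e. multO D Ob \<noteq> 0}. int (multO D Ob))"

end

theory Submission
  imports Defs
begin


lemma degree_eq_sum_order:
  fixes p :: "'k::field poly"
  assumes "p \<noteq> 0"
    and cl: "\<forall>P::'k poly. degree P > 0 \<longrightarrow> (\<exists>x. poly P x = 0)"
  shows   "(\<Sum>x | poly p x = 0. order x p) = degree p"
  using assms(1)
proof (induction "degree p" arbitrary: p rule: less_induct)
  case (less p)
  show ?case
  proof (cases "\<exists>x. poly p x = 0")
    case False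
    thus ?thesis
      using cl by auto
  next
    case True
    then obtain x where x: "poly p x = 0"
      by auto
    have "[:-x, 1:] ^ order x p dvd p"
      by (simp add: order_1)
    then obtain q where q: "p = [:-x, 1:] ^ order x p * q"
      by (elim dvdE)
    have [simp]: "q \<noteq> 0"
      using q less.prems by auto
    have "order x p = order x p + order x q"
      by (subst q, subst order_mult) (auto simp: order_power_n_n)
    hence "order x q = 0"
      by auto
    hence [simp]: "poly q x \<noteq> 0"
      by (simp add: order_root)
    have deg_p: "degree p = degree q + order x p"
      by (subst q, subst degree_mult_eq) (auto simp: degree_power_eq)
    moreover have "order x p > 0"
      using x less.prems by (simp add: order_root)
    ultimately have "degree q < degree p"
      by linarith
    hence "(\<Sum>x | poly q x = 0. order x q) = degree q"
      by (intro less.hyps) auto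
    hence "order x p + (\<Sum>x | poly q x = 0. order x q) = degree p"
      by (simp add: deg_p)
    also have "{y. poly q y = 0} = {y. poly p y = 0} - {x}"
      by (subst q) auto
    also have "(\<Sum>y \<in> {y. poly p y = 0} - {x}. order y q) =
               (\<Sum>y \<in> {y. poly p y = 0} - {x}. order y p)"
      by (intro sum.cong refl, subst q)
         (auto simp: order_mult order_power_n_n intro!: order_0I)
    also have "order x p + \<dots> = (\<Sum>y \<in> insert x ({y. poly p y = 0} - {x}). order y p)"
      using \<open>p \<noteq> 0\<close> by (subst sum.insert) (auto simp: poly_roots_finite)
    also have "insert x ({y. poly p y = 0} - {x}) = {y. poly p y = 0}"
      using \<open>poly p x = 0\<close> by auto
    finally show ?thesis .
  qed
qed

lemma even_sum_invol:
  fixes f :: "'a \<Rightarrow> nat"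
  assumes "finite A" "\<forall>x\<in>A. g x \<in> A \<and> g (g x) = x \<and> g x \<noteq> x \<and> f (g x) = f x"
  shows "even (sum f A)"
  using assms
proof (induction "card A" arbitrary: A rule: less_induct)
  case (less A)
  show ?case
  proof (cases "A = {}")
    case True thus ?thesis by simp
  next
    case False
    then obtain x where x: "x \<in> A" by auto
    define Orb where "Orb = {x, g x}"
    define B where "B = A - Orb"
    have gx: "g x \<in> A" "g x \<noteq> x" "f (g x) = f x" using less.prems x by auto
    have OA: "Orb \<subseteq> A" unfolding Orb_def using x gx by auto
    have "B \<subset> A" unfolding B_def Orb_def using x by blast
    hence cB: "card B < card A" using less.prems(1) by (simp add: psubset_card_mono)
    have clB: "\<forall>y\<in>B. g y \<in> B \<and> g (g y) = y \<and> g y \<noteq> y \<and> f (g y) = f y"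
    proof
      fix y assume y: "y \<in> B"
      have yA: "y \<in> A" using y B_def by auto
      have yO: "y \<noteq> x" "y \<noteq> g x" using y B_def Orb_def by auto
      have py: "g y \<in> A" "g (g y) = y" "g y \<noteq> y" "f (g y) = f y" using less.prems(2) yA by auto
      have "g y \<noteq> x" using py yO by metis
      moreover have "g y \<noteq> g x" using py yO gx less.prems(2) x by metis
      ultimately have "g y \<in> B" using py unfolding B_def Orb_def by auto
      then show "g y \<in> B \<and> g (g y) = y \<and> g y \<noteq> y \<and> f (g y) = f y" using py by simp
    qed
    have "even (sum f B)"
      by (rule less.hyps[OF cB]) (use less.prems clB in \<open>auto simp: B_def\<close>)
    moreover have "sum f A = sum f B + sum f Orb"
      unfolding B_def by (rule sum.subset_diff[OF OA less.prems(1)])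
    moreover have "sum f Orb = 2 * f x" unfolding Orb_def using gx by simp
    ultimately show ?thesis by simp
  qed
qed

lemma dvd4_sum_klein:
  fixes f :: "'a \<Rightarrow> nat"
  assumes "finite A" "A \<subseteq> U"
    and U: "\<And>x. x \<in> U \<Longrightarrow> g (g x) = x \<and> h (h x) = x \<and> g (h x) = h (g x)
     \<and> g x \<noteq> x \<and> h x \<noteq> x \<and> g (h x) \<noteq> x \<and> g x \<noteq> h x \<and> g (h x) \<noteq> g x \<and> g (h x) \<noteq> h x
     \<and> f (g x) = f x \<and> f (h x) = f x"
    and cl: "\<forall>x\<in>A. g x \<in> A \<and> h x \<in> A"
  shows "4 dvd (sum f A)"
  using assms(1,2) cl
proof (induction "card A" arbitrary: A rule: less_induct)
  case (less A)
  show ?case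
  proof (cases "A = {}")
    case True thus ?thesis by simp
  next
    case False
    then obtain x where x: "x \<in> A" by auto
    have xU: "x \<in> U" using x less.prems(2) by blast
    note Ux = U[OF xU]
    have gA: "g x \<in> A" "h x \<in> A" using less.prems(3) x by auto
    have hgA: "g (h x) \<in> A" using less.prems(3) gA by auto
    have Ugx: "g (g (g x)) = g x \<and> h (h (g x)) = g x" using U[of "g x"] gA less.prems(2) by blast
    have Uhx: "g (g (h x)) = h x \<and> h (h (h x)) = h x" using U[of "h x"] gA less.prems(2) by blast
    define Orb where "Orb = {x, g x, h x, g (h x)}"
    define B where "B = A - Orb"
    have OA: "Orb \<subseteq> A" unfolding Orb_def using gA hgA x by auto
    have "B \<subset> A" unfolding B_def Orb_def using x by blast
    hence cB: "card B < card A" using less.prems(1) by (simp add: psubset_card_mono)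
    have clB: "\<forall>y\<in>B. g y \<in> B \<and> h y \<in> B"
    proof
      fix y assume y: "y \<in> B"
      have yA: "y \<in> A" using y B_def by auto
      have yO: "y \<noteq> x" "y \<noteq> g x" "y \<noteq> h x" "y \<noteq> g (h x)" using y B_def Orb_def by auto
      have yU: "y \<in> U" using yA less.prems(2) by blast
      note Uy = U[OF yU]
      have py: "g y \<in> A" "h y \<in> A" using less.prems(3) yA by auto
      have "g y \<noteq> x" using Uy Ux Ugx Uhx yO by metis
      moreover have "g y \<noteq> g x" using Uy Ux Ugx Uhx yO by metis
      moreover have "g y \<noteq> h x" using Uy Ux Ugx Uhx yO by metis
      moreover have "g y \<noteq> g (h x)" using Uy Ux Ugx Uhx yO by metis
      moreover have "h y \<noteq> x" using Uy Ux Ugx Uhx yO by metis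
      moreover have "h y \<noteq> g x" using Uy Ux Ugx Uhx yO by metis
      moreover have "h y \<noteq> h x" using Uy Ux Ugx Uhx yO by metis
      moreover have "h y \<noteq> g (h x)" using Uy Ux Ugx Uhx yO by metis
      ultimately have "g y \<notin> Orb" "h y \<notin> Orb" unfolding Orb_def by auto
      then show "g y \<in> B \<and> h y \<in> B" using py unfolding B_def by blast
    qed
    have "4 dvd (sum f B)"
      by (rule less.hyps[OF cB]) (use less.prems clB in \<open>auto simp: B_def\<close>)
    moreover have "sum f A = sum f B + sum f Orb"
      unfolding B_def by (rule sum.subset_diff[OF OA less.prems(1)])
    moreover have "sum f Orb = 4 * f x"
    proof -
      have d: "x \<noteq> g x" "x \<noteq> h x" "x \<noteq> g (h x)" "g x \<noteq> h x" "g x \<noteq> g (h x)" "h x \<noteq> g (h x)"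
        and fv: "f (g x) = f x" "f (h x) = f x"
        using Ux by auto
      have fv2: "f (g (h x)) = f x" using U[of "h x"] fv less.prems(2) gA by auto
      show ?thesis unfolding Orb_def using d fv fv2 by simp
    qed
    ultimately show ?thesis by simp
  qed
qed



context
  fixes q e :: nat
  assumes qodd: "odd q"
    and per: "\<forall>x::'k::field. \<exists>N>0. x ^ (q ^ N) = x"
begin

lemma per_mult: "(x::'k) ^ (q ^ N) = x \<Longrightarrow> x ^ (q ^ (N * t)) = x"
proof (induction t)
  case 0 then show ?case by simp
next
  case (Suc t)
  have "x ^ (q ^ (N * Suc t)) = (x ^ (q ^ (N * t))) ^ (q ^ N)"
    by (simp add: power_add power_mult[symmetric] mult.commute)
  then show ?case using Suc by simp
qed

lemma frob_inj: "(x::'k) ^ q = y ^ q \<Longrightarrow> x = y"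
proof -
  assume h: "x ^ q = y ^ q"
  obtain N1 where N1: "N1 > 0" "x ^ (q ^ N1) = x" using per by blast
  obtain N2 where N2: "N2 > 0" "y ^ (q ^ N2) = y" using per by blast
  define M where "M = N1 * N2"
  have M: "M > 0" using N1 N2 M_def by simp
  have xM: "x ^ (q ^ M) = x" using per_mult[OF N1(2)] M_def by simp
  have yM: "y ^ (q ^ M) = y" using per_mult[OF N2(2), of N1] M_def by (simp add: mult.commute)
  have qM: "q ^ M = q * q ^ (M - 1)" using M by (metis Suc_diff_1 power_Suc)
  have "x = (x ^ q) ^ (q ^ (M - 1))" using xM qM by (simp add: power_mult)
  also have "\<dots> = (y ^ q) ^ (q ^ (M - 1))" using h by simp
  also have "\<dots> = y" using yM qM by (simp add: power_mult)
  finally show "x = y" .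
qed

lemma gam_even: "even e \<Longrightarrow> gam q e (x::'k) = x ^ q"
  by (simp add: gam_def)

lemma gam_odd: "odd e \<Longrightarrow> gam q e (x::'k) = - (x ^ q)"
  by (simp add: gam_def)

lemma gam_minus: "gam q e (- (x::'k)) = - gam q e x"
  using qodd by (simp add: gam_def power_minus_odd)

lemma gam_inverse: "gam q e (inverse (x::'k)) = inverse (gam q e x)"
  by (cases "even e") (simp_all add: gam_def power_inverse)

lemma gam_inj: "gam q e (x::'k) = gam q e y \<Longrightarrow> x = y"
  by (cases "even e") (auto simp: gam_even gam_odd intro: frob_inj)

lemma gam_gam: "gam q e (gam q e (x::'k)) = x ^ (q * q)"
  using qodd by (cases "even e") (auto simp: gam_even gam_odd power_mult power_minus_odd)

lemma gam_pow2: "(gam q e ^^ (2 * t)) (x::'k) = x ^ (q ^ (2 * t))"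
proof (induction t)
  case 0 then show ?case by simp
next
  case (Suc t)
  have "(gam q e ^^ (2 * Suc t)) x = gam q e (gam q e ((gam q e ^^ (2 * t)) x))"
    by simp
  also have "\<dots> = (x ^ (q ^ (2 * t))) ^ (q * q)" using Suc gam_gam by simp
  also have "\<dots> = x ^ (q ^ (2 * Suc t))" by (simp add: power_mult[symmetric] algebra_simps)
  finally show ?case .
qed

lemma gam_period: "\<exists>P>0. (gam q e ^^ P) (x::'k) = x"
proof -
  obtain N where N: "N > 0" "x ^ (q ^ N) = x" using per by blast
  have "(gam q e ^^ (2 * N)) x = x"
    using gam_pow2[of N x] per_mult[OF N(2), of 2] by (simp add: mult.commute)
  then show ?thesis using N(1) by (intro exI[of _ "2 * N"]) simp
qed

lemma gam_back: "(gam q e ^^ P) (z::'k) = z \<Longrightarrow> P > 0 \<Longrightarrow> z = (gam q e ^^ (P - 1)) (gam q e z)"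
  by (metis Suc_diff_1 comp_apply funpow_Suc_right)

lemma funpow_gam_minus: "(gam q e ^^ j) (- (x::'k)) = - (gam q e ^^ j) x"
  by (induction j) (auto simp: gam_minus)

lemma funpow_gam_inverse: "(gam q e ^^ j) (inverse (x::'k)) = inverse ((gam q e ^^ j) x)"
  by (induction j) (auto simp: gam_inverse)

lemma ktri_minus: "(x::'k) \<in> ktri \<Longrightarrow> - x \<in> ktri"
  unfolding ktri_def by (auto, metis minus_minus)

lemma ktri_inverse: "(x::'k) \<in> ktri \<Longrightarrow> inverse x \<in> ktri"
  by (auto simp: ktri_def) (metis inverse_minus_eq inverse_inverse_eq inverse_1)+

lemma ktri_gam: "(x::'k) \<in> ktri \<Longrightarrow> gam q e x \<in> ktri"
proof -
  assume x: "x \<in> ktri"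
  have q0: "q > 0" using qodd by (cases q) auto
  have "x ^ q \<noteq> 0" using x by (auto simp: ktri_def)
  moreover have "x ^ q \<noteq> 1"
  proof
    assume "x ^ q = 1"
    then have "x ^ q = 1 ^ q" by simp
    then have "x = 1" by (rule frob_inj)
    then show False using x by (auto simp: ktri_def)
  qed
  moreover have "x ^ q \<noteq> -1"
  proof
    assume "x ^ q = -1"
    then have "x ^ q = (-1) ^ q" using qodd by simp
    then have "x = -1" by (rule frob_inj)
    then show False using x by (auto simp: ktri_def)
  qed
  moreover have "- (x ^ q) \<noteq> 1" "- (x ^ q) \<noteq> -1" "- (x ^ q) \<noteq> 0"
    using calculation by (metis minus_minus, metis minus_minus, simp)
  ultimately show ?thesis
    by (cases "even e") (auto simp: ktri_def gam_even gam_odd)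
qed

lemma orbAG_ktri: "y \<in> orbAG q e (x::'k) \<Longrightarrow> y \<in> ktri"
  by (induction rule: orbAG.induct) (auto intro: ktri_inverse ktri_gam)

lemma orbG_ktri: "y \<in> orbG q e (x::'k) \<Longrightarrow> y \<in> ktri"
  by (induction rule: orbG.induct) (auto intro: ktri_gam)

lemma orbG_sub: "y \<in> orbG q e (x::'k) \<Longrightarrow> y \<in> orbAG q e x"
  by (induction rule: orbG.induct) (auto intro: orbAG.intros)

lemma orbG_pow: "y \<in> orbG q e (x::'k) \<Longrightarrow> \<exists>j. y = (gam q e ^^ j) x"
proof (induction rule: orbG.induct)
  case base then show ?case by (intro exI[of _ 0]) simp
next
  case (fwd y)
  then obtain j where "y = (gam q e ^^ j) x" by blast
  then show ?case by (intro exI[of _ "Suc j"]) simp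
next
  case (bwd y z)
  then obtain j where j: "y = (gam q e ^^ j) x" by blast
  obtain P where P: "P > 0" "(gam q e ^^ P) z = z" using gam_period by blast
  have "z = (gam q e ^^ (P - 1)) (gam q e z)" using gam_back P by blast
  also have "\<dots> = (gam q e ^^ (P - 1 + j)) x" using j bwd by (simp add: funpow_add)
  finally show ?case by blast
qed

lemma orbAG_minus: "y \<in> orbAG q e (x::'k) \<Longrightarrow> - y \<in> orbAG q e (- x)"
proof (induction rule: orbAG.induct)
  case base then show ?case by (intro orbAG.base ktri_minus)
next
  case (inv y)
  have "inverse (- y) \<in> orbAG q e (- x)" by (rule orbAG.inv[OF inv.IH])
  then show ?case by simp
next
  case (fwd y)
  have "gam q e (- y) \<in> orbAG q e (- x)" by (rule orbAG.fwd[OF fwd.IH])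
  then show ?case by (simp add: gam_minus)
next
  case (bwd y z)
  show ?case
    by (rule orbAG.bwd[OF bwd.IH]) (use bwd in \<open>auto simp: gam_minus ktri_minus\<close>)
qed

lemma orbG_minus: "y \<in> orbG q e (x::'k) \<Longrightarrow> - y \<in> orbG q e (- x)"
proof (induction rule: orbG.induct)
  case base then show ?case by (intro orbG.base ktri_minus)
next
  case (fwd y)
  have "gam q e (- y) \<in> orbG q e (- x)" by (rule orbG.fwd[OF fwd.IH])
  then show ?case by (simp add: gam_minus)
next
  case (bwd y z)
  show ?case
    by (rule orbG.bwd[OF bwd.IH]) (use bwd in \<open>auto simp: gam_minus ktri_minus\<close>)
qed

lemma orbAG_minus_img: "uminus ` orbAG q e (x::'k) = orbAG q e (- x)"
proof
  show "uminus ` orbAG q e x \<subseteq> orbAG q e (- x)" using orbAG_minus by blast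
  show "orbAG q e (- x) \<subseteq> uminus ` orbAG q e x"
  proof
    fix y assume "y \<in> orbAG q e (- x)"
    then have "- y \<in> orbAG q e x" using orbAG_minus by fastforce
    then show "y \<in> uminus ` orbAG q e x" by (metis image_eqI minus_minus)
  qed
qed

lemma orbG_minus_img: "uminus ` orbG q e (x::'k) = orbG q e (- x)"
proof
  show "uminus ` orbG q e x \<subseteq> orbG q e (- x)" using orbG_minus by blast
  show "orbG q e (- x) \<subseteq> uminus ` orbG q e x"
  proof
    fix y assume "y \<in> orbG q e (- x)"
    then have "- y \<in> orbG q e x" using orbG_minus by fastforce
    then show "y \<in> uminus ` orbG q e x" by (metis image_eqI minus_minus)
  qed
qed

lemma orbAG_mult:
  fixes D :: "'k poly"
  assumes inv: "\<forall>x. x \<noteq> 0 \<longrightarrow> mult D (inverse x) = mult D x"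
    and neg: "\<forall>x::'k. x \<noteq> 0 \<longrightarrow> mult D (- x) = mult D x"
    and fr: "\<forall>x::'k. x \<noteq> 0 \<longrightarrow> mult D (x ^ q) = mult D x"
  shows "y \<in> orbAG q e x \<Longrightarrow> mult D y = mult D x"
proof (induction rule: orbAG.induct)
  case base then show ?case by simp
next
  case (inv y)
  have "y \<noteq> 0" using orbAG_ktri[OF inv.hyps] by (auto simp: ktri_def)
  then show ?case using assms(1) inv.IH by simp
next
  case (fwd y)
  have y0: "y \<noteq> 0" using orbAG_ktri[OF fwd.hyps] by (auto simp: ktri_def)
  then have "y ^ q \<noteq> 0" by simp
  then have "mult D (gam q e y) = mult D (y ^ q)"
    using neg by (cases "even e") (auto simp: gam_even gam_odd)
  then show ?case using fr y0 fwd.IH by simp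
next
  case (bwd y z)
  have z0: "z \<noteq> 0" using bwd.hyps by (auto simp: ktri_def)
  then have "z ^ q \<noteq> 0" by simp
  then have "mult D (gam q e z) = mult D (z ^ q)"
    using neg by (cases "even e") (auto simp: gam_even gam_odd)
  then show ?case using fr z0 bwd by simp
qed

lemma sq_orbAG: "y \<in> orbAG q e (x::'k) \<Longrightarrow> x * x = -1 \<Longrightarrow> y * y = -1"
proof (induction rule: orbAG.induct)
  case base then show ?case by simp
next
  case (inv y)
  then show ?case by (metis inverse_minus_eq inverse_mult_distrib inverse_1)
next
  case (fwd y)
  have "gam q e y * gam q e y = (y * y) ^ q"
    by (cases "even e") (auto simp: gam_even gam_odd power_mult_distrib)
  then show ?case using fwd qodd by simp
next
  case (bwd y z)
  have "gam q e z * gam q e z = (z * z) ^ q"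
    by (cases "even e") (auto simp: gam_even gam_odd power_mult_distrib)
  moreover have "y * y = -1" using bwd by simp
  ultimately have "(z * z) ^ q = -1" using bwd(3) by metis
  then have "(z * z) ^ q = (-1) ^ q" using qodd by simp
  then show ?case by (rule frob_inj)
qed


lemma half_lemma: "(d::nat) dvd 2 * a \<Longrightarrow> 0 < a \<Longrightarrow> a < d \<Longrightarrow> 2 * a = d"
proof -
  assume h: "d dvd 2 * a" "0 < a" "a < d"
  then obtain c where c: "2 * a = d * c" by blast
  have "c \<noteq> 0"
  proof
    assume "c = 0" then show False using c h by simp
  qed
  moreover have "c < 2"
  proof (rule ccontr)
    assume "\<not> c < 2"
    then have "d * 2 \<le> d * c" by simp
    then show False using c h by linarith
  qed
  ultimately have "c = 1" by linarith
  then show ?thesis using c by simp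
qed

lemma fixed_sq:
  assumes two: "(2::'k) \<noteq> 0" and y: "(y::'k) \<in> ktri"
    and j: "(gam q e ^^ j) y = - y" and k: "(gam q e ^^ k) y = inverse y"
  shows "y * y = -1"
proof -
  define G :: "'k \<Rightarrow> 'k" where "G = gam q e"
  have y0: "y \<noteq> 0" using y by (auto simp: ktri_def)
  have yneg: "- y \<noteq> y"
  proof
    assume "- y = y"
    then have "2 * y = 0" by (metis mult_2 add.left_inverse)
    then show False using two y0 by simp
  qed
  have yinv: "inverse y \<noteq> y"
  proof
    assume "inverse y = y"
    then have "y * y = 1" using y0 by (metis right_inverse)
    then have "(y - 1) * (y + 1) = 0" by (simp add: algebra_simps)
    then show False using y by (auto simp: ktri_def eq_neg_iff_add_eq_0)
  qed
  obtain P where P: "P > 0" "(G ^^ P) y = y" using gam_period G_def by blast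
  define d where "d = (LEAST m. m > 0 \<and> (G ^^ m) y = y)"
  have d: "d > 0 \<and> (G ^^ d) y = y" unfolding d_def by (rule LeastI[of _ P]) (use P in auto)
  have dmin: "\<And>m. 0 < m \<Longrightarrow> m < d \<Longrightarrow> (G ^^ m) y \<noteq> y"
    unfolding d_def using not_less_Least by blast
  have dmul: "\<And>t. (G ^^ (d * t)) y = y"
  proof -
    fix t show "(G ^^ (d * t)) y = y"
    proof (induction t)
      case 0 then show ?case by simp
    next
      case (Suc t)
      have "(G ^^ (d * Suc t)) y = (G ^^ d) ((G ^^ (d * t)) y)"
        by (simp add: funpow_add)
      then show ?case using Suc d by simp
    qed
  qed
  have red: "\<And>m. (G ^^ m) y = (G ^^ (m mod d)) y"
  proof -
    fix m
    have "(G ^^ m) y = (G ^^ (m mod d + d * (m div d))) y" by simp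
    also have "\<dots> = (G ^^ (m mod d)) ((G ^^ (d * (m div d))) y)" by (simp only: funpow_add comp_apply)
    also have "\<dots> = (G ^^ (m mod d)) y" using dmul by simp
    finally show "(G ^^ m) y = (G ^^ (m mod d)) y" .
  qed
  have per0: "\<And>m. (G ^^ m) y = y \<Longrightarrow> m mod d = 0"
  proof (rule ccontr)
    fix m assume "(G ^^ m) y = y" "m mod d \<noteq> 0"
    then show False using dmin[of "m mod d"] red[of m] d by auto
  qed
  have Gm: "\<And>m x. (G ^^ m) (- x) = - (G ^^ m) x" unfolding G_def by (rule funpow_gam_minus)
  have Gi: "\<And>m x. (G ^^ m) (inverse x) = inverse ((G ^^ m) x)" unfolding G_def by (rule funpow_gam_inverse)
  have j': "(G ^^ j) y = - y" using j G_def by simp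
  have k': "(G ^^ k) y = inverse y" using k G_def by simp
  have "(G ^^ (j + j)) y = y" using j' Gm by (simp add: funpow_add)
  then have "(j + j) mod d = 0" by (rule per0)
  then have j2: "d dvd 2 * j" by (simp add: mult_2 dvd_eq_mod_eq_0)
  have "(G ^^ (k + k)) y = y" using k' Gi by (simp add: funpow_add)
  then have "(k + k) mod d = 0" by (rule per0)
  then have k2: "d dvd 2 * k" by (simp add: mult_2 dvd_eq_mod_eq_0)
  have jn: "j mod d \<noteq> 0"
  proof
    assume "j mod d = 0"
    then have "(G ^^ j) y = y" using red[of j] by simp
    then show False using j' yneg by simp
  qed
  have kn: "k mod d \<noteq> 0"
  proof
    assume "k mod d = 0"
    then have "(G ^^ k) y = y" using red[of k] by simp
    then show False using k' yinv by simp
  qed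
  have "(2 * (j mod d)) mod d = (2 * j) mod d" by (rule mod_mult_right_eq)
  then have "d dvd 2 * (j mod d)" using j2 by (simp add: dvd_eq_mod_eq_0)
  then have jh: "2 * (j mod d) = d" using jn d by (intro half_lemma) auto
  have "(2 * (k mod d)) mod d = (2 * k) mod d" by (rule mod_mult_right_eq)
  then have "d dvd 2 * (k mod d)" using k2 by (simp add: dvd_eq_mod_eq_0)
  then have kh: "2 * (k mod d) = d" using kn d by (intro half_lemma) auto
  have jk: "j mod d = k mod d" using jh kh by linarith
  have "- y = (G ^^ j) y" using j' by simp
  also have "\<dots> = (G ^^ (j mod d)) y" by (rule red)
  also have "\<dots> = (G ^^ (k mod d)) y" using jk by simp
  also have "\<dots> = (G ^^ k) y" by (rule red[symmetric])
  also have "\<dots> = inverse y" by (rule k')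
  finally have "- y = inverse y" .
  then have "y * (- y) = 1" using y0 by simp
  then show ?thesis by (metis minus_minus mult_minus_right)
qed


lemma orbG_fix: "z \<in> orbG q e y \<Longrightarrow> gam q e y = y \<Longrightarrow> z = (y::'k)"
proof (induction rule: orbG.induct)
  case base then show ?case by simp
next
  case (fwd z) then show ?case by simp
next
  case (bwd z w)
  then have "gam q e w = gam q e y" by simp
  then show ?case by (rule gam_inj)
qed
end



lemma final_arith:
  fixes J L m K r e n q :: nat
  assumes "e < 2" "J = (if odd (e + r) then m else 0) + 2 * L" "n = 2*m + 4*K" "q = 2*r+1"
  shows "int J mod 2 = (int n * (int q - (-1)^e) div 4) mod 2"
proof -
  have X: "int n * (int q - (-1)^e) = 4 * ((int m + 2 * int K) * (int r + int e))"
  proof -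
    have "e = 0 \<or> e = 1" using assms(1) by auto
    then show ?thesis using assms(3,4) by (elim disjE) (auto simp: algebra_simps)
  qed
  have Y: "int n * (int q - (-1)^e) div 4 = (int m + 2 * int K) * (int r + int e)"
    unfolding X by simp
  have "even (int J) \<longleftrightarrow> even ((int m + 2 * int K) * (int r + int e))"
    using assms(2) by (auto simp: even_mult_iff)
  then have "even (int J) \<longleftrightarrow> even (int n * (int q - (-1)^e) div 4)" using Y by simp
  then show ?thesis by (metis odd_iff_mod_2_eq_one even_iff_mod_2_eq_zero)
qed



theorem mainTheorem7:
  fixes D :: "'k::field poly" and p m q e n :: nat
  assumes "prime p" and "odd p" and "of_nat p = (0::'k)"
    and "m > 0" and "q = p ^ m"
    and "\<forall>P::'k poly. degree P > 0 \<longrightarrow> (\<exists>x. poly P x = 0)"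
    and "\<forall>x::'k. \<exists>N>0. x ^ (q ^ N) = x"
    and "e < 2" and "even n"
    and "D \<in> frakA n"
    and "\<forall>x::'k. x \<noteq> 0 \<longrightarrow> mult D (- x) = mult D x"
    and "\<forall>x::'k. x \<noteq> 0 \<longrightarrow> mult D (x ^ q) = mult D x"
  shows "jinv q e D mod 2 = (int n * (int q - (-1) ^ e) div 4) mod 2"
proof -
  have qodd: "odd q" using assms(2,5) by simp
  note per = assms(7)
  note neg = assms(11)
  note frq = assms(12)
  have Dfa: "lead_coeff D = 1" "poly D 0 \<noteq> 0" "degree D = n"
    "\<forall>x. x \<noteq> 0 \<longrightarrow> mult D (inverse x) = mult D x" "even (mult D 1)" "even (mult D (-1))"
    using assms(10) unfolding frakA_def by auto
  have D0: "D \<noteq> 0" using Dfa(1) by auto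
  have mult_root: "\<And>x. mult D x \<noteq> 0 \<longleftrightarrow> poly D x = 0"
    unfolding mult_def using D0 by (simp add: order_root)
  have two: "(2::'k) \<noteq> 0"
  proof
    assume h2: "(2::'k) = 0"
    obtain t where "p = 2*t+1" using assms(2) oddE by blast
    then have "(of_nat p::'k) = 2 * of_nat t + 1" by simp
    then have "(of_nat p::'k) = 1" using h2 by simp
    then show False using assms(3) by simp
  qed
  have one_neg: "(1::'k) \<noteq> -1"
  proof
    assume "(1::'k) = -1"
    then have "(2::'k) = 1 + 1" "1 + (1::'k) = 0" by simp_all
    then show False using two by simp
  qed
  have xneg: "\<And>x::'k. x \<noteq> 0 \<Longrightarrow> - x \<noteq> x"
  proof
    fix x :: 'k assume "x \<noteq> 0" "- x = x"
    then have "2 * x = 0" by (metis mult_2 add.left_inverse)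
    then show False using two \<open>x \<noteq> 0\<close> by simp
  qed
  obtain r where r: "q = 2*r+1" using qodd oddE by blast
  obtain i0 :: 'k where ii: "i0 * i0 = -1"
  proof -
    have "degree [:1, 0, 1::'k:] > 0" by simp
    then obtain x where "poly [:1,0,1::'k:] x = 0" using assms(6) by blast
    then have "1 + x * x = 0" by simp
    then have "x * x = -1" by (simp add: eq_neg_iff_add_eq_0 add.commute)
    then show ?thesis using that by blast
  qed
  have i00: "i0 \<noteq> 0" using ii one_neg by auto
  have sq_cases: "\<And>x. x * x = -1 \<Longrightarrow> x = i0 \<or> x = -i0"
  proof -
    fix x :: 'k assume "x * x = -1"
    then have "(x - i0) * (x + i0) = 0" using ii by (simp add: algebra_simps)
    then show "x = i0 \<or> x = -i0" by (auto simp: eq_neg_iff_add_eq_0)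
  qed
  have sq1: "\<And>x::'k. x * x = 1 \<Longrightarrow> x = 1 \<or> x = -1"
  proof -
    fix x :: 'k assume "x * x = 1"
    then have "(x - 1) * (x + 1) = 0" by (simp add: algebra_simps)
    then show "x = 1 \<or> x = -1" by (auto simp: eq_neg_iff_add_eq_0)
  qed
  have i0k: "i0 \<in> ktri"
    using ii one_neg i00 unfolding ktri_def by auto
  have i0neg: "i0 \<noteq> - i0" using xneg[OF i00] by auto
  have inv_i0: "inverse i0 = - i0" using ii by (intro inverse_unique) simp
  define Oi where "Oi = {i0, - i0}"
  have orbi: "orbAG q e i0 = Oi"
  proof
    show "orbAG q e i0 \<subseteq> Oi"
      using sq_orbAG[OF qodd per _ ii] sq_cases unfolding Oi_def by blast
    have "i0 \<in> orbAG q e i0" by (rule orbAG.base[OF i0k])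
    moreover then have "inverse i0 \<in> orbAG q e i0" by (rule orbAG.inv)
    ultimately show "Oi \<subseteq> orbAG q e i0" unfolding Oi_def using inv_i0 by auto
  qed
  have gi0: "gam q e i0 = (-1) ^ (e + r) * i0"
  proof -
    have "i0 ^ q = (i0 * i0) ^ r * i0" unfolding r by (simp add: power_add power_mult power2_eq_square[symmetric])
    then show ?thesis unfolding gam_def using ii by (simp add: power_add)
  qed
  have OiOm: "Oi \<in> OmegaAG' q e \<longleftrightarrow> odd (e + r)"
  proof
    assume "odd (e + r)"
    then have g: "gam q e i0 = - i0" using gi0 by simp
    have "orbG q e i0 \<subseteq> Oi" using orbG_sub[OF qodd per] orbi by blast
    moreover have "i0 \<in> orbG q e i0" by (rule orbG.base[OF i0k])
    moreover then have "gam q e i0 \<in> orbG q e i0" by (rule orbG.fwd)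
    ultimately have "orbG q e i0 = Oi" using g unfolding Oi_def by auto
    then show "Oi \<in> OmegaAG' q e"
      unfolding OmegaAG'_def OmegaAG_def using orbi i0k Oi_def by auto
  next
    assume h: "Oi \<in> OmegaAG' q e"
    show "odd (e + r)"
    proof (rule ccontr)
      assume "\<not> odd (e + r)"
      then have g1: "gam q e i0 = i0" using gi0 by simp
      have g2: "gam q e (- i0) = - i0" using g1 gam_minus[OF qodd per] by metis
      have fixorb: "\<And>y z. gam q e (y::'k) = y \<Longrightarrow> z \<in> orbG q e y \<Longrightarrow> z = y"
        using orbG_fix[OF qodd per] by blast
      obtain y where y: "y \<in> Oi" "Oi = orbG q e y" using h unfolding OmegaAG'_def by blast
      have "gam q e y = y" using y(1) g1 g2 unfolding Oi_def by auto
      then have "Oi \<subseteq> {y}" using fixorb y(2) by blast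
      then show False using i0neg unfolding Oi_def by auto
    qed
  qed
  have multO_eq: "\<And>x. x \<in> ktri \<Longrightarrow> multO D (orbAG q e x) = mult D x"
  proof -
    fix x :: 'k assume xk: "x \<in> ktri"
    have "x \<in> orbAG q e x" by (rule orbAG.base[OF xk])
    then have "(SOME y. y \<in> orbAG q e x) \<in> orbAG q e x" by (rule someI)
    then show "multO D (orbAG q e x) = mult D x"
      unfolding multO_def by (rule orbAG_mult[OF qodd per Dfa(4) neg frq])
  qed
  have Om: "\<And>Ob. Ob \<in> OmegaAG' q e \<Longrightarrow> \<exists>x y. x \<in> ktri \<and> Ob = orbAG q e x \<and> y \<in> Ob \<and> Ob = orbG q e y"
    unfolding OmegaAG'_def OmegaAG_def by blast
  define S where "S = {Ob \<in> OmegaAG' q e. multO D Ob \<noteq> 0}"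
  have jS: "jinv q e D = int (sum (multO D) S)" unfolding jinv_def S_def by simp
  have finS: "finite S"
  proof (rule finite_subset)
    show "S \<subseteq> orbAG q e ` {x. poly D x = 0}"
    proof
      fix Ob assume "Ob \<in> S"
      then have h: "Ob \<in> OmegaAG' q e" "multO D Ob \<noteq> 0" unfolding S_def by auto
      then obtain x where x: "x \<in> ktri" "Ob = orbAG q e x" using Om by blast
      then have "mult D x \<noteq> 0" using h(2) multO_eq by simp
      then show "Ob \<in> orbAG q e ` {x. poly D x = 0}" using x mult_root by auto
    qed
    show "finite (orbAG q e ` {x. poly D x = 0})" using poly_roots_finite[OF D0] by simp
  qed
  define g where "g = (\<lambda>Ob::'k set. uminus ` Ob)"
  have gg: "\<And>Ob. g (g Ob) = Ob" unfolding g_def by (simp add: image_image)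
  have gOi: "g Oi = Oi" unfolding g_def Oi_def by auto
  have invol: "\<forall>Ob\<in>S - {Oi}. g Ob \<in> S - {Oi} \<and> g (g Ob) = Ob \<and> g Ob \<noteq> Ob \<and> multO D (g Ob) = multO D Ob"
  proof
    fix Ob assume ObS: "Ob \<in> S - {Oi}"
    then have h: "Ob \<in> OmegaAG' q e" "multO D Ob \<noteq> 0" "Ob \<noteq> Oi" unfolding S_def by auto
    then obtain x y where xy: "x \<in> ktri" "Ob = orbAG q e x" "y \<in> Ob" "Ob = orbG q e y" using Om by blast
    have x0: "x \<noteq> 0" using xy(1) by (auto simp: ktri_def)
    have g1: "g Ob = orbAG q e (- x)" unfolding g_def xy(2) by (rule orbAG_minus_img[OF qodd per])
    have g2: "g Ob = orbG q e (- y)" unfolding g_def using xy(4) orbG_minus_img[OF qodd per] by metis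
    have my: "- y \<in> g Ob" unfolding g_def using xy(3) by simp
    have mx: "- x \<in> ktri" by (rule ktri_minus[OF qodd per xy(1)])
    have mO: "multO D (g Ob) = multO D Ob" using g1 xy(1,2) mx multO_eq neg x0 by simp
    have gOm: "g Ob \<in> OmegaAG' q e"
      unfolding OmegaAG'_def OmegaAG_def using g1 g2 my mx by blast
    have gnOi: "g Ob \<noteq> Oi"
    proof
      assume "g Ob = Oi"
      then have "g (g Ob) = g Oi" by simp
      then show False using gg gOi h(3) by simp
    qed
    have gnO: "g Ob \<noteq> Ob"
    proof
      assume eq: "g Ob = Ob"
      have yk: "y \<in> ktri" using xy(3,4) orbG_ktri[OF qodd per] by blast
      have "- y \<in> orbG q e y" using my eq xy(4) by simp
      then obtain j where j: "- y = (gam q e ^^ j) y" using orbG_pow[OF qodd per] by blast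
      have "y \<in> orbAG q e x" using xy(2,3) by simp
      then have "inverse y \<in> orbAG q e x" by (rule orbAG.inv)
      then have "inverse y \<in> orbG q e y" using xy(2,4) by simp
      then obtain k where k: "inverse y = (gam q e ^^ k) y" using orbG_pow[OF qodd per] by blast
      have yy: "y * y = -1" using fixed_sq[OF qodd per two yk j[symmetric] k[symmetric]] .
      have "Ob \<subseteq> Oi"
      proof
        fix z assume "z \<in> Ob"
        then have "z \<in> orbAG q e y" using xy(4) orbG_sub[OF qodd per] by blast
        then have "z * z = -1" using sq_orbAG[OF qodd per _ yy] by blast
        then show "z \<in> Oi" using sq_cases unfolding Oi_def by blast
      qed
      moreover have "Oi \<subseteq> Ob"
      proof -
        have "y \<in> Ob" "- y \<in> Ob" using xy(3) my eq by auto
        moreover have "y = i0 \<or> y = - i0" using sq_cases yy by blast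
        ultimately show ?thesis unfolding Oi_def by auto
      qed
      ultimately show False using h(3) by blast
    qed
    have "g Ob \<in> S" unfolding S_def using gOm mO h(2) by simp
    then show "g Ob \<in> S - {Oi} \<and> g (g Ob) = Ob \<and> g Ob \<noteq> Ob \<and> multO D (g Ob) = multO D Ob"
      using gnOi gg gnO mO by simp
  qed
  have ev: "even (sum (multO D) (S - {Oi}))"
    by (rule even_sum_invol[of "S - {Oi}" g]) (use finS invol in auto)
  have multOi: "multO D Oi = mult D i0" using multO_eq[OF i0k] orbi by simp
  have OiS: "Oi \<in> S \<longleftrightarrow> odd (e + r) \<and> mult D i0 \<noteq> 0"
    unfolding S_def using OiOm multOi by auto
  have Ssplit: "sum (multO D) S = (if odd (e + r) then mult D i0 else 0) + sum (multO D) (S - {Oi})"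
  proof (cases "Oi \<in> S")
    case True
    then show ?thesis using OiS multOi finS by (simp add: sum.remove)
  next
    case False
    then show ?thesis using OiS by auto
  qed
  obtain L where L: "sum (multO D) S = (if odd (e + r) then mult D i0 else 0) + 2 * L"
    using Ssplit ev by (metis evenE)
  define Z where "Z = {x. poly D x = 0}"
  have finZ: "finite Z" using poly_roots_finite[OF D0] Z_def by simp
  have nZ: "n = sum (mult D) Z"
    using degree_eq_sum_order[OF D0 assms(6)] Dfa(3) unfolding Z_def mult_def by simp
  define F where "F = {1, -1, i0, - i0}"
  define U where "U = Z \<union> F"
  have finU: "finite U" unfolding U_def F_def using finZ by simp
  have FU: "F \<subseteq> U" unfolding U_def by blast
  have "sum (mult D) Z = sum (mult D) U"
  proof (rule sum.mono_neutral_left[OF finU])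
    show "Z \<subseteq> U" unfolding U_def by blast
    show "\<forall>x\<in>U - Z. mult D x = 0" using mult_root unfolding Z_def by auto
  qed
  also have "\<dots> = sum (mult D) (U - F) + sum (mult D) F" by (rule sum.subset_diff[OF FU finU])
  finally have nUF: "n = sum (mult D) (U - F) + sum (mult D) F" using nZ by simp
  have i1: "i0 \<noteq> 1" "i0 \<noteq> -1" using i0k unfolding ktri_def by auto
  have i2: "- i0 \<noteq> 1" "- i0 \<noteq> -1" using i1 by (metis minus_minus, metis minus_minus)
  have m1: "mult D (-1) = mult D 1" using neg by simp
  have mi: "mult D (- i0) = mult D i0" using neg i00 by simp
  have sF: "sum (mult D) F = 2 * mult D 1 + 2 * mult D i0"
    unfolding F_def using one_neg i1 i2 i0neg m1 mi by simp
  define A where "A = U - F"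
  define V where "V = ktri - {i0, - i0}"
  have AV: "A \<subseteq> V"
  proof
    fix x assume "x \<in> A"
    then have "poly D x = 0" "x \<notin> F" unfolding A_def U_def Z_def by auto
    moreover then have "x \<noteq> 0" using Dfa(2) by auto
    ultimately show "x \<in> V" unfolding V_def ktri_def F_def by auto
  qed
  have Vprop: "\<And>x. x \<in> V \<Longrightarrow> - (- x) = x \<and> inverse (inverse x) = x \<and> - (inverse x) = inverse (- x)
     \<and> - x \<noteq> x \<and> inverse x \<noteq> x \<and> - (inverse x) \<noteq> x \<and> - x \<noteq> inverse x \<and> - (inverse x) \<noteq> - x
     \<and> - (inverse x) \<noteq> inverse x \<and> mult D (- x) = mult D x \<and> mult D (inverse x) = mult D x"
  proof -
    fix x :: 'k assume xV: "x \<in> V"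
    have x0: "x \<noteq> 0" and x1: "x \<noteq> 1" "x \<noteq> -1" and xi: "x \<noteq> i0" "x \<noteq> - i0"
      using xV unfolding V_def ktri_def by auto
    have a1: "inverse x \<noteq> x"
    proof
      assume "inverse x = x"
      then have "x * x = 1" using x0 by (metis right_inverse)
      then show False using sq1 x1 by blast
    qed
    have a2: "x * x \<noteq> -1" using sq_cases xi by blast
    have a3: "- (inverse x) \<noteq> x"
    proof
      assume h: "- (inverse x) = x"
      have "x * x = x * (- (inverse x))" using h by simp
      also have "\<dots> = -1" using x0 by simp
      finally show False using a2 by simp
    qed
    have a4: "- x \<noteq> inverse x" using a3 by (metis minus_minus)
    have a5: "- (inverse x) \<noteq> - x" using a1 by simp
    have a6: "- (inverse x) \<noteq> inverse x" using xneg x0 by simp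
    show "- (- x) = x \<and> inverse (inverse x) = x \<and> - (inverse x) = inverse (- x)
     \<and> - x \<noteq> x \<and> inverse x \<noteq> x \<and> - (inverse x) \<noteq> x \<and> - x \<noteq> inverse x \<and> - (inverse x) \<noteq> - x
     \<and> - (inverse x) \<noteq> inverse x \<and> mult D (- x) = mult D x \<and> mult D (inverse x) = mult D x"
      using a1 a3 a4 a5 a6 xneg[OF x0] neg Dfa(4) x0 by simp
  qed
  have Acl: "\<forall>x\<in>A. - x \<in> A \<and> inverse x \<in> A"
  proof
    fix x assume xA: "x \<in> A"
    then have xV: "x \<in> V" using AV by blast
    have xZ: "mult D x \<noteq> 0" "x \<notin> F" using xA mult_root unfolding A_def U_def Z_def by auto
    have x0: "x \<noteq> 0" using xV unfolding V_def ktri_def by auto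
    have "mult D (- x) \<noteq> 0" "mult D (inverse x) \<noteq> 0" using xZ Vprop[OF xV] by auto
    moreover have "- x \<notin> F"
      using xZ(2) unfolding F_def by (auto, metis minus_minus)
    moreover have "inverse x \<notin> F"
    proof
      assume "inverse x \<in> F"
      then have "inverse (inverse x) \<in> inverse ` F" by blast
      moreover have "inverse ` F = F" unfolding F_def using inv_i0 by auto
      ultimately show False using xZ(2) by simp
    qed
    ultimately show "- x \<in> A \<and> inverse x \<in> A" unfolding A_def U_def Z_def using mult_root by auto
  qed
  have A4: "4 dvd sum (mult D) A"
  proof (rule dvd4_sum_klein[of A V uminus inverse])
    show "finite A" unfolding A_def using finU by simp
    show "A \<subseteq> V" by (rule AV)
    show "\<forall>x\<in>A. - x \<in> A \<and> inverse x \<in> A" by (rule Acl)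
    fix x assume "x \<in> V"
    then show "- (- x) = x \<and> inverse (inverse x) = x \<and> - (inverse x) = inverse (- x)
     \<and> - x \<noteq> x \<and> inverse x \<noteq> x \<and> - (inverse x) \<noteq> x \<and> - x \<noteq> inverse x \<and> - (inverse x) \<noteq> - x
     \<and> - (inverse x) \<noteq> inverse x \<and> mult D (- x) = mult D x \<and> mult D (inverse x) = mult D x"
      by (rule Vprop)
  qed
  obtain b where b: "sum (mult D) A = 4 * b" using A4 by blast
  obtain a where a: "mult D 1 = 2 * a" using Dfa(5) by blast
  have nform: "n = 2 * mult D i0 + 4 * (a + b)"
    using nUF sF a b unfolding A_def by simp
  have "int (sum (multO D) S) mod 2 = (int n * (int q - (-1) ^ e) div 4) mod 2"
    by (rule final_arith[OF assms(8) L nform r])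
  then show ?thesis using jS by simp
qed

end
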